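(* Let $X\in\mathcal{D}^-$ and let $Z$ be a random variable. (a) If $X$ is in the sum-domain of attraction of $Z$, i.e. there exist $a_n>0$ and $b_n\in\mathbb{R}$ such that $a_n(X_1+\dots+X_n)-b_n\to Z$ in distribution, where $X_1,X_2,\dots$ are i.i.d. copies of $X$, then $Z\in\mathcal{D}^-$. (b) If $X$ is in the max-domain of attraction of $Z$, i.e. there exist $a_n>0$ and $b_n\in\mathbb{R}$ such that $a_n\max\{X_1,\dots,X_n\}-b_n\to Z$ in distribution, where $X_1,X_2,\dots$ are i.i.d. copies of $X$, then $Z\in\mathcal{D}^-$.
   Context: For real random variables, $X \le_{st} Y$ means $P(X\le t)\ge P(Y\le t)$ for all $t\in\mathbb{R}$. A real random variable $X$ (equivalently its distribution function $F_X$) belongs to $\mathcal{D}^-$ if for every $n\in\mathbb{N}$, all $\theta_1,\dots,\theta_n\ge 0$ with $\sum_{i=1}^n\theta_i=1$, and i.i.d. random variables $X_1,\dots,X_n$ with distribution $F_X$, we have $X_1\le_{st}\sum_{i=1}^n\theta_iX_i$. *)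

theory Defs
  imports "HOL-Probability.Probability"
begin

text \<open>Laws of real random variables are represented by real probability measures on borel.
  For laws M and N, st_le M N means X \<le>st Y for X with law M and Y with law N.\<close>

definition st_le :: "real measure \<Rightarrow> real measure \<Rightarrow> bool" where
  "st_le M N \<longleftrightarrow> (\<forall>t::real. cdf N t \<le> cdf M t)"

definition in_Dminus :: "real measure \<Rightarrow> bool" where
  "in_Dminus M \<longleftrightarrow>
     (\<forall>(n::nat) (\<theta>::nat \<Rightarrow> real).
        (\<forall>i\<in>{1..n}. 0 \<le> \<theta> i) \<and> (\<Sum>i=1..n. \<theta> i) = 1 \<longrightarrow>
        st_le M (distr (PiM {1..n} (\<lambda>_. M)) borel (\<lambda>x. \<Sum>i=1..n. \<theta> i * x i)))"

end

theory Submission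
  imports Defs
begin

lemma cdf_distr_eq:
  assumes "prob_space \<Omega>" "f \<in> borel_measurable \<Omega>"
  shows "cdf (distr \<Omega> borel f) t = measure \<Omega> {\<omega>\<in>space \<Omega>. f \<omega> \<le> t}"
  using assms unfolding cdf_def
  by (subst measure_distr) (auto intro!: arg_cong[where f="measure \<Omega>"])

lemma cdf_distr_mono_pointwise:
  assumes "prob_space \<Omega>" "f1 \<in> borel_measurable \<Omega>" "f2 \<in> borel_measurable \<Omega>"
    and "\<And>\<omega>. \<omega> \<in> space \<Omega> \<Longrightarrow> f1 \<omega> \<le> f2 \<omega>"
  shows "cdf (distr \<Omega> borel f2) t \<le> cdf (distr \<Omega> borel f1) t"
proof -
  interpret prob_space \<Omega> by fact
  have "measure \<Omega> {\<omega>\<in>space \<Omega>. f2 \<omega> \<le> t} \<le> measure \<Omega> {\<omega>\<in>space \<Omega>. f1 \<omega> \<le> t}"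
    using assms(2,3,4) by (intro finite_measure_mono) (auto intro: order.trans)
  then show ?thesis using assms by (simp add: cdf_distr_eq)
qed

lemma quantile_le:
  assumes "real_distribution \<mu>" "real_distribution \<nu>" "\<And>t. cdf \<nu> t \<le> cdf \<mu> t"
    and "0 < \<omega>" "\<omega> < 1"
  shows "Inf {x. \<omega> \<le> cdf \<mu> x} \<le> Inf {x. \<omega> \<le> cdf \<nu> x}"
proof -
  interpret A: cdf_distribution \<mu> unfolding cdf_distribution_def by fact
  interpret B: cdf_distribution \<nu> unfolding cdf_distribution_def by fact
  have "\<omega> \<le> cdf \<nu> (B.I \<omega>)" using B.pseudoinverse[of \<omega> "B.I \<omega>"] assms by simp
  also have "\<dots> \<le> cdf \<mu> (B.I \<omega>)" by fact
  finally show ?thesis using A.pseudoinverse[of \<omega> "B.I \<omega>"] assms by simp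
qed

lemma distr_sets_eq_borel:
  assumes "sets N = sets (borel::real measure)"
  shows "distr U N f = distr U borel f"
proof -
  have "space N = space (borel::real measure)" using sets_eq_imp_space_eq[OF assms] .
  then show ?thesis unfolding distr_def using assms by simp
qed

lemma compose_meas:
  assumes q: "q \<in> measurable U N"
  shows "compose J q \<in> measurable (PiM J (\<lambda>_. U)) (PiM J (\<lambda>_. N))"
  unfolding compose_def
proof (rule measurable_restrict)
  fix i assume "i \<in> J"
  show "(\<lambda>x. q (x i)) \<in> measurable (PiM J (\<lambda>_. U)) N"
    using measurable_compose[OF measurable_component_singleton[where M="\<lambda>_. U", OF \<open>i \<in> J\<close>] q] .
qed

lemma st_mono_prod:
  fixes g :: "(nat \<Rightarrow> real) \<Rightarrow> real"
  assumes \<mu>: "real_distribution \<mu>" and \<nu>: "real_distribution \<nu>" and le: "\<And>t. cdf \<nu> t \<le> cdf \<mu> t"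
    and J: "finite J" and g[measurable]: "g \<in> borel_measurable (PiM J (\<lambda>_. borel))"
    and mono: "\<And>x y. (\<And>j. j \<in> J \<Longrightarrow> x j \<le> y j) \<Longrightarrow> g x \<le> g y"
  shows "cdf (distr (PiM J (\<lambda>_. \<nu>)) borel g) t \<le> cdf (distr (PiM J (\<lambda>_. \<mu>)) borel g) t"
proof -
  interpret A: cdf_distribution \<mu> unfolding cdf_distribution_def by fact
  interpret B: cdf_distribution \<nu> unfolding cdf_distribution_def by fact
  let ?U = "restrict_space lborel {0<..<1::real}"
  have U: "prob_space ?U"
    by (auto simp add: emeasure_restrict_space space_restrict_space intro!: prob_spaceI)
  have PU: "prob_space (PiM J (\<lambda>_. ?U))" using U by (intro prob_space_PiM)
  have rep: "PiM J (\<lambda>_. \<rho>) = distr (PiM J (\<lambda>_. ?U)) (PiM J (\<lambda>_. \<rho>)) (compose J q)"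
    if r: "real_distribution \<rho>" and q: "q \<in> borel_measurable ?U" and d: "distr ?U borel q = \<rho>"
    for \<rho> q
  proof -
    interpret R: real_distribution \<rho> by fact
    have q': "q \<in> measurable ?U \<rho>" using q by (simp only: measurable_cong_sets[OF refl R.events_eq_borel])
    have "distr ?U \<rho> q = \<rho>" using d by (subst distr_sets_eq_borel[OF R.events_eq_borel])
    then have "PiM J (\<lambda>_. \<rho>) = PiM J (\<lambda>i. distr ?U \<rho> q)" by simp
    also have "\<dots> = distr (PiM J (\<lambda>_. ?U)) (PiM J (\<lambda>_. \<rho>)) (compose J q)"
      by (rule distr_PiM_finite_prob_space'[symmetric]) (use J U q' R.prob_space_axioms in auto)
    finally show ?thesis .
  qed
  have gen: "distr (PiM J (\<lambda>_. \<rho>)) borel g = distr (PiM J (\<lambda>_. ?U)) borel (\<lambda>u. g (compose J q u))"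
    if r: "real_distribution \<rho>" and q: "q \<in> borel_measurable ?U" and d: "distr ?U borel q = \<rho>"
    for \<rho> q
  proof -
    interpret R: real_distribution \<rho> by fact
    have q': "q \<in> measurable ?U \<rho>" using q by (simp only: measurable_cong_sets[OF refl R.events_eq_borel])
    have cm: "compose J q \<in> measurable (PiM J (\<lambda>_. ?U)) (PiM J (\<lambda>_. \<rho>))"
      by (rule compose_meas[OF q'])
    have g': "g \<in> borel_measurable (PiM J (\<lambda>_. \<rho>))"
      using g by (simp only: measurable_cong_sets[OF sets_PiM_cong[OF refl R.events_eq_borel] refl])
    show ?thesis
      by (subst rep[OF r q d]) (subst distr_distr[OF g' cm], simp add: comp_def)
  qed
  have mA: "A.I \<in> borel_measurable ?U" using A.measurable_CI by (simp only: measurable_cong_sets[OF sets_restrict_space_cong[OF sets_lborel] refl])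
  have mB: "B.I \<in> borel_measurable ?U" using B.measurable_CI by (simp only: measurable_cong_sets[OF sets_restrict_space_cong[OF sets_lborel] refl])
  have cA: "(\<lambda>u. g (compose J A.I u)) \<in> borel_measurable (PiM J (\<lambda>_. ?U))"
    by (rule measurable_compose[OF compose_meas[OF mA] g])
  have cB: "(\<lambda>u. g (compose J B.I u)) \<in> borel_measurable (PiM J (\<lambda>_. ?U))"
    by (rule measurable_compose[OF compose_meas[OF mB] g])
  have "cdf (distr (PiM J (\<lambda>_. ?U)) borel (\<lambda>u. g (compose J B.I u))) t \<le>
        cdf (distr (PiM J (\<lambda>_. ?U)) borel (\<lambda>u. g (compose J A.I u))) t"
  proof (rule cdf_distr_mono_pointwise[OF PU cA cB])
    fix u assume u: "u \<in> space (PiM J (\<lambda>_. ?U))"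
    show "g (compose J A.I u) \<le> g (compose J B.I u)"
    proof (rule mono)
      fix j assume j: "j \<in> J"
      then have "u j \<in> {0<..<1}" using u by (auto simp: space_PiM space_restrict_space)
      then show "compose J A.I u j \<le> compose J B.I u j"
        using quantile_le[OF \<mu> \<nu> le] j by (auto simp: compose_def)
    qed
  qed
  then show ?thesis
    using gen[OF \<mu> mA A.distr_I_eq_M] gen[OF \<nu> mB B.distr_I_eq_M] by simp
qed

lemma indep_coords:
  assumes M: "prob_space M" and I: "I \<noteq> {}"
  shows "prob_space.indep_vars (PiM I (\<lambda>_. M)) (\<lambda>_. M) (\<lambda>i x. x i) I"
proof -
  interpret P: prob_space "PiM I (\<lambda>_. M)" by (intro prob_space_PiM M)
  have "distr (PiM I (\<lambda>_. M)) (PiM I (\<lambda>_. M)) (\<lambda>x. \<lambda>i\<in>I. x i) = distr (PiM I (\<lambda>_. M)) (PiM I (\<lambda>_. M)) (\<lambda>x. x)"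
    by (rule distr_cong) (auto simp: space_PiM PiE_def extensional_restrict)
  also have "\<dots> = PiM I (\<lambda>_. M)" by simp
  also have "\<dots> = PiM I (\<lambda>i. distr (PiM I (\<lambda>_. M)) M (\<lambda>x. x i))"
    by (rule PiM_cong[OF refl], rule distr_PiM_component[symmetric]) (auto simp: M)
  finally show ?thesis
    by (subst P.indep_vars_iff_distr_eq_PiM'[OF I]) auto
qed

lemma block:
  fixes M :: "'a measure"
  assumes M: "prob_space M" and I: "I \<noteq> {}" and J: "J \<noteq> {}"
  shows "distr (PiM (I \<times> J) (\<lambda>_. M)) (PiM I (\<lambda>_. PiM J (\<lambda>_. M))) (\<lambda>\<omega>. \<lambda>i\<in>I. \<lambda>j\<in>J. \<omega> (i,j))
         = PiM I (\<lambda>_. PiM J (\<lambda>_. M))"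
proof -
  let ?\<Omega> = "PiM (I \<times> J) (\<lambda>_. M)"
  interpret P: prob_space ?\<Omega> by (intro prob_space_PiM M)
  have ind: "P.indep_vars (\<lambda>_. M) (\<lambda>p x. x p) (I \<times> J)"
    using I J by (intro indep_coords[OF M]) auto
  have ind2: "P.indep_vars (\<lambda>i. PiM ({i} \<times> J) (\<lambda>_. M)) (\<lambda>i \<omega>. restrict (\<lambda>p. \<omega> p) ({i} \<times> J)) I"
    by (rule P.indep_vars_restrict[OF ind]) (auto simp: disjoint_family_on_def)
  have hm: "(\<lambda>y. \<lambda>j\<in>J. y (i, j)) \<in> measurable (PiM ({i} \<times> J) (\<lambda>_. M)) (PiM J (\<lambda>_. M))" for i
    by (rule measurable_restrict) (auto intro!: measurable_component_singleton)
  have ind3: "P.indep_vars (\<lambda>_. PiM J (\<lambda>_. M)) (\<lambda>i \<omega>. (\<lambda>y. \<lambda>j\<in>J. y (i, j)) (restrict (\<lambda>p. \<omega> p) ({i} \<times> J))) I"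
    by (rule P.indep_vars_compose2[OF ind2 hm])
  have ind4: "P.indep_vars (\<lambda>_. PiM J (\<lambda>_. M)) (\<lambda>i \<omega>. \<lambda>j\<in>J. \<omega> (i, j)) I"
    using ind3 by (rule P.indep_vars_cong[THEN iffD1, rotated 3]) (auto simp: restrict_def fun_eq_iff)
  have d: "distr ?\<Omega> (PiM J (\<lambda>_. M)) (\<lambda>\<omega>. \<lambda>j\<in>J. \<omega> (i, j)) = PiM J (\<lambda>_. M)" if "i \<in> I" for i
    using distr_PiM_reindex[of "I \<times> J" "\<lambda>_. M" "\<lambda>j. (i, j)" J] M that by (auto simp: inj_on_def)
  have rv: "(\<lambda>\<omega>. \<lambda>j\<in>J. \<omega> (i, j)) \<in> measurable ?\<Omega> (PiM J (\<lambda>_. M))" if "i \<in> I" for i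
    using that by (auto intro!: measurable_restrict measurable_component_singleton)
  show ?thesis
    using ind4 P.indep_vars_iff_distr_eq_PiM'[OF I rv] d by (simp cong: PiM_cong)
qed


lemma char_scale:
  assumes "real_distribution \<mu>"
  shows "char (distr \<mu> borel (\<lambda>y. c * y)) t = char \<mu> (c * t)"
proof -
  interpret real_distribution \<mu> by fact
  show ?thesis unfolding char_def by (subst integral_distr) (auto simp: ac_simps)
qed

lemma wsum_meas:
  assumes "sets \<mu> = sets borel" "finite I"
  shows "(\<lambda>x. \<Sum>i\<in>I. \<theta> i * (x i::real)) \<in> borel_measurable (PiM I (\<lambda>_. \<mu>))"
proof -
  have "(\<lambda>x. \<Sum>i\<in>I. \<theta> i * (x i::real)) \<in> borel_measurable (PiM I (\<lambda>_. borel))" by measurable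
  then show ?thesis by (simp only: measurable_cong_sets[OF sets_PiM_cong[OF refl assms(1)] refl])
qed

lemma char_wsum:
  assumes \<mu>: "real_distribution \<mu>" and I: "finite I" "I \<noteq> {}"
  shows "char (distr (PiM I (\<lambda>_. \<mu>)) borel (\<lambda>x. \<Sum>i\<in>I. \<theta> i * x i)) t = (\<Prod>i\<in>I. char \<mu> (\<theta> i * t))"
proof -
  interpret R: real_distribution \<mu> by fact
  interpret P: prob_space "PiM I (\<lambda>_. \<mu>)" by (intro prob_space_PiM R.prob_space_axioms)
  have ind: "P.indep_vars (\<lambda>_. \<mu>) (\<lambda>i x. x i) I"
    by (rule indep_coords[OF R.prob_space_axioms I(2)])
  have ind2: "P.indep_vars (\<lambda>_. borel) (\<lambda>i x. (\<lambda>y. \<theta> i * y) (x i)) I"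
    by (rule P.indep_vars_compose2[OF ind]) (simp add: measurable_cong_sets[OF R.events_eq_borel refl])
  have d: "distr (PiM I (\<lambda>_. \<mu>)) borel (\<lambda>x. \<theta> i * x i) = distr \<mu> borel (\<lambda>y. \<theta> i * y)" if "i \<in> I" for i
  proof -
    have "distr (PiM I (\<lambda>_. \<mu>)) borel (\<lambda>x. \<theta> i * x i) = distr (distr (PiM I (\<lambda>_. \<mu>)) \<mu> (\<lambda>x. x i)) borel (\<lambda>y. \<theta> i * y)"
      using that by (subst distr_distr) (auto simp: comp_def measurable_cong_sets[OF R.events_eq_borel refl])
    also have "\<dots> = distr \<mu> borel (\<lambda>y. \<theta> i * y)"
      using that by (subst distr_PiM_component) (auto simp: R.prob_space_axioms)
    finally show ?thesis .
  qed
  show ?thesis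
    using P.char_distr_sum[OF ind2, of t] d char_scale[OF \<mu>] by (simp cong: prod.cong)
qed

lemma weak_conv_wsum:
  assumes \<mu>: "\<And>n. real_distribution (\<mu> n)" and \<mu>': "real_distribution \<mu>'" and w: "weak_conv_m \<mu> \<mu>'"
    and I: "finite I" "I \<noteq> {}"
  shows "weak_conv_m (\<lambda>n. distr (PiM I (\<lambda>_. \<mu> n)) borel (\<lambda>x. \<Sum>i\<in>I. \<theta> i * x i))
                     (distr (PiM I (\<lambda>_. \<mu>')) borel (\<lambda>x. \<Sum>i\<in>I. \<theta> i * x i))"
proof (rule levy_continuity)
  fix n
  interpret R: real_distribution "\<mu> n" by fact
  interpret P: prob_space "PiM I (\<lambda>_. \<mu> n)" by (intro prob_space_PiM R.prob_space_axioms)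
  show "real_distribution (distr (PiM I (\<lambda>_. \<mu> n)) borel (\<lambda>x. \<Sum>i\<in>I. \<theta> i * x i))"
    using I by (intro P.real_distribution_distr wsum_meas R.events_eq_borel)
next
  interpret R: real_distribution "\<mu>'" by fact
  interpret P: prob_space "PiM I (\<lambda>_. \<mu>')" by (intro prob_space_PiM R.prob_space_axioms)
  show "real_distribution (distr (PiM I (\<lambda>_. \<mu>')) borel (\<lambda>x. \<Sum>i\<in>I. \<theta> i * x i))"
    using I by (intro P.real_distribution_distr wsum_meas R.events_eq_borel)
next
  fix t
  show "(\<lambda>n. char (distr (PiM I (\<lambda>_. \<mu> n)) borel (\<lambda>x. \<Sum>i\<in>I. \<theta> i * x i)) t) \<longlonglongrightarrow>
        char (distr (PiM I (\<lambda>_. \<mu>')) borel (\<lambda>x. \<Sum>i\<in>I. \<theta> i * x i)) t"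
    unfolding char_wsum[OF \<mu> I] char_wsum[OF \<mu>' I]
    by (intro tendsto_prod levy_continuity1[OF \<mu> \<mu>' w])
qed

lemma st_limit:
  assumes \<mu>: "\<And>n. real_distribution (\<mu> n)" and \<mu>': "real_distribution \<mu>'" and w1: "weak_conv_m \<mu> \<mu>'"
    and \<nu>: "\<And>n. real_distribution (\<nu> n)" and \<nu>': "real_distribution \<nu>'" and w2: "weak_conv_m \<nu> \<nu>'"
    and le: "\<And>n t. n \<ge> N \<Longrightarrow> cdf (\<nu> n) t \<le> cdf (\<mu> n) t"
  shows "cdf \<nu>' t \<le> cdf \<mu>' t"
proof -
  interpret A: real_distribution \<mu>' by fact
  interpret B: real_distribution \<nu>' by fact
  have good: "cdf \<nu>' x \<le> cdf \<mu>' x" if "measure \<mu>' {x} = 0" "measure \<nu>' {x} = 0" for x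
  proof -
    have l1: "(\<lambda>n. cdf (\<mu> n) x) \<longlonglongrightarrow> cdf \<mu>' x"
      using w1 that A.isCont_cdf by (auto simp: weak_conv_m_def weak_conv_def)
    have l2: "(\<lambda>n. cdf (\<nu> n) x) \<longlonglongrightarrow> cdf \<nu>' x"
      using w2 that B.isCont_cdf by (auto simp: weak_conv_m_def weak_conv_def)
    show ?thesis
      by (rule LIMSEQ_le[OF l2 l1]) (auto intro!: exI[of _ N] le)
  qed
  show ?thesis
  proof (rule ccontr)
    assume "\<not> ?thesis"
    then have lt: "cdf \<mu>' t < cdf \<nu>' t" by simp
    have "((cdf \<mu>') \<longlongrightarrow> cdf \<mu>' t) (at_right t)"
      using A.cdf_is_right_cont by (simp add: continuous_within)
    from order_tendstoD(2)[OF this lt]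
    obtain b where b: "b > t" "\<And>y. y > t \<Longrightarrow> y < b \<Longrightarrow> cdf \<mu>' y < cdf \<nu>' t"
      unfolding eventually_at_right_field by blast
    have cnt: "countable ({x. measure \<mu>' {x} \<noteq> 0} \<union> {x. measure \<nu>' {x} \<noteq> 0})"
      using A.countable_support B.countable_support by simp
    obtain x where x: "x \<in> {t<..<b}" "x \<notin> {x. measure \<mu>' {x} \<noteq> 0} \<union> {x. measure \<nu>' {x} \<noteq> 0}"
      using open_minus_countable[OF cnt, of "{t<..<b}"] b by auto
    have "cdf \<nu>' t \<le> cdf \<nu>' x" using x by (intro B.cdf_nondecreasing) auto
    also have "\<dots> \<le> cdf \<mu>' x" using x by (intro good) auto
    also have "\<dots> < cdf \<nu>' t" using x b by auto
    finally show False by simp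
  qed
qed


lemma dom:
  fixes g :: "(nat \<Rightarrow> real) \<Rightarrow> real" and M :: "real measure"
  assumes M: "real_distribution M" and D: "in_Dminus M" and n: "n \<ge> 1"
    and g[measurable]: "g \<in> borel_measurable (PiM {1..n} (\<lambda>_. borel))"
    and mono: "\<And>x y. (\<And>j. j \<in> {1..n} \<Longrightarrow> x j \<le> y j) \<Longrightarrow> g x \<le> g y"
    and sup: "\<And>k \<theta> (y::nat\<Rightarrow>nat\<Rightarrow>real). (\<forall>i\<in>{1..k}. 0 \<le> \<theta> i) \<Longrightarrow> (\<Sum>i=1..k. \<theta> i) = 1 \<Longrightarrow>
          g (\<lambda>j\<in>{1..n}. \<Sum>i=1..k. \<theta> i * y i j) \<le> (\<Sum>i=1..k. \<theta> i * g (\<lambda>j\<in>{1..n}. y i j))"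
  shows "in_Dminus (distr (PiM {1..n} (\<lambda>_. M)) borel g)"
  unfolding in_Dminus_def st_le_def
proof (intro allI impI)
  fix k :: nat and \<theta> :: "nat \<Rightarrow> real" and t :: real
  assume \<theta>: "(\<forall>i\<in>{1..k}. 0 \<le> \<theta> i) \<and> (\<Sum>i=1..k. \<theta> i) = 1"
  define I where "I = {1..k}"
  define J where "J = {1..n}"
  have k: "k \<ge> 1" using \<theta> by (cases k) auto
  have I: "finite I" "I \<noteq> {}" using k by (auto simp: I_def)
  have J: "finite J" "J \<noteq> {}" using n by (auto simp: J_def)
  interpret R: real_distribution M by fact
  have RP: "prob_space M" by (rule R.prob_space_axioms)
  have sM: "sets M = sets borel" by (rule R.events_eq_borel)
  let ?Y = "distr (PiM J (\<lambda>_. M)) borel g"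
  let ?ws = "\<lambda>x. \<Sum>i\<in>I. \<theta> i * x i"
  let ?\<nu> = "distr (PiM I (\<lambda>_. M)) borel ?ws"
  let ?\<Omega> = "PiM (I \<times> J) (\<lambda>_. M)"
  interpret PJ: prob_space "PiM J (\<lambda>_. M)" by (intro prob_space_PiM RP)
  interpret PI: prob_space "PiM I (\<lambda>_. M)" by (intro prob_space_PiM RP)
  interpret PO: prob_space ?\<Omega> by (intro prob_space_PiM RP)
  have gJ: "g \<in> borel_measurable (PiM J (\<lambda>_. M))"
    using g unfolding J_def by (simp only: measurable_cong_sets[OF sets_PiM_cong[OF refl sM] refl])
  have wsI: "?ws \<in> borel_measurable (PiM I (\<lambda>_. M))" by (rule wsum_meas[OF sM I(1)])
  have RY: "real_distribution ?Y" by (rule PJ.real_distribution_distr[OF gJ])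
  have R\<nu>: "real_distribution ?\<nu>" by (rule PI.real_distribution_distr[OF wsI])
  have gY: "g \<in> measurable (PiM J (\<lambda>_. M)) ?Y"
    using gJ by (simp only: measurable_cong_sets[OF refl real_distribution.events_eq_borel[OF RY]])
  have ws\<nu>: "?ws \<in> measurable (PiM I (\<lambda>_. M)) ?\<nu>"
    using wsI by (simp only: measurable_cong_sets[OF refl real_distribution.events_eq_borel[OF R\<nu>]])
  have sO: "sets ?\<Omega> = sets (PiM (I \<times> J) (\<lambda>_. borel))" by (rule sets_PiM_cong[OF refl sM])
  have le\<nu>: "cdf ?\<nu> s \<le> cdf M s" for s
    using D \<theta> unfolding in_Dminus_def st_le_def I_def by blast
  have S: "distr (PiM I (\<lambda>_. ?Y)) borel ?ws = distr ?\<Omega> borel (\<lambda>\<omega>. \<Sum>i\<in>I. \<theta> i * g (\<lambda>j\<in>J. \<omega> (i,j)))"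
  proof -
    have dY: "distr (PiM J (\<lambda>_. M)) ?Y g = ?Y"
      by (rule distr_sets_eq_borel[OF real_distribution.events_eq_borel[OF RY]])
    have e1: "PiM I (\<lambda>_. ?Y) = distr (PiM I (\<lambda>_. PiM J (\<lambda>_. M))) (PiM I (\<lambda>_. ?Y)) (compose I g)"
      using distr_PiM_finite_prob_space'[of I "\<lambda>_. PiM J (\<lambda>_. M)" "\<lambda>_. ?Y" g] I(1) gY
        PJ.prob_space_axioms real_distribution.axioms(1)[OF RY] dY by simp
    have e2: "PiM I (\<lambda>_. PiM J (\<lambda>_. M)) = distr ?\<Omega> (PiM I (\<lambda>_. PiM J (\<lambda>_. M))) (\<lambda>\<omega>. \<lambda>i\<in>I. \<lambda>j\<in>J. \<omega> (i,j))"
      by (rule block[OF RP I(2) J(2), symmetric])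
    have mb: "(\<lambda>\<omega>. \<lambda>i\<in>I. \<lambda>j\<in>J. \<omega> (i,j)) \<in> measurable ?\<Omega> (PiM I (\<lambda>_. PiM J (\<lambda>_. M)))"
      by (auto intro!: measurable_restrict measurable_component_singleton)
    have mc: "compose I g \<in> measurable (PiM I (\<lambda>_. PiM J (\<lambda>_. M))) (PiM I (\<lambda>_. ?Y))"
      by (rule compose_meas[OF gY])
    have mw: "?ws \<in> borel_measurable (PiM I (\<lambda>_. ?Y))"
      by (rule wsum_meas[OF real_distribution.events_eq_borel[OF RY] I(1)])
    have "distr (PiM I (\<lambda>_. ?Y)) borel ?ws = distr ?\<Omega> borel (?ws \<circ> (compose I g \<circ> (\<lambda>\<omega>. \<lambda>i\<in>I. \<lambda>j\<in>J. \<omega> (i,j))))"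
      apply (subst e1)
      apply (subst e2)
      apply (subst distr_distr[OF mc mb])
      apply (subst distr_distr[OF mw measurable_comp[OF mb mc]])
      apply (rule refl)
      done
    also have "\<dots> = distr ?\<Omega> borel (\<lambda>\<omega>. \<Sum>i\<in>I. \<theta> i * g (\<lambda>j\<in>J. \<omega> (i,j)))"
      by (rule distr_cong) (auto simp: compose_def intro!: sum.cong)
    finally show ?thesis .
  qed
  have W: "distr (PiM J (\<lambda>_. ?\<nu>)) borel g = distr ?\<Omega> borel (\<lambda>\<omega>. g (\<lambda>j\<in>J. \<Sum>i\<in>I. \<theta> i * \<omega> (i,j)))"
  proof -
    have d\<nu>: "distr (PiM I (\<lambda>_. M)) ?\<nu> ?ws = ?\<nu>"
      by (rule distr_sets_eq_borel[OF real_distribution.events_eq_borel[OF R\<nu>]])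
    have w1: "PiM J (\<lambda>_. ?\<nu>) = distr (PiM J (\<lambda>_. PiM I (\<lambda>_. M))) (PiM J (\<lambda>_. ?\<nu>)) (compose J ?ws)"
      using distr_PiM_finite_prob_space'[of J "\<lambda>_. PiM I (\<lambda>_. M)" "\<lambda>_. ?\<nu>" ?ws] J(1) ws\<nu>
        PI.prob_space_axioms real_distribution.axioms(1)[OF R\<nu>] d\<nu> by simp
    have w2: "PiM J (\<lambda>_. PiM I (\<lambda>_. M)) = distr (PiM (J \<times> I) (\<lambda>_. M)) (PiM J (\<lambda>_. PiM I (\<lambda>_. M))) (\<lambda>\<omega>. \<lambda>j\<in>J. \<lambda>i\<in>I. \<omega> (j,i))"
      by (rule block[OF RP J(2) I(2), symmetric])
    have w3: "PiM (J \<times> I) (\<lambda>_. M) = distr ?\<Omega> (PiM (J \<times> I) (\<lambda>_. M)) (\<lambda>\<omega>. \<lambda>p\<in>J \<times> I. \<omega> (prod.swap p))"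
    proof -
      have "prod.swap \<in> J \<times> I \<rightarrow> I \<times> J" by auto
      then show ?thesis
        using distr_PiM_reindex[of "I \<times> J" "\<lambda>_. M" prod.swap "J \<times> I"] RP by auto
    qed
    have ms: "(\<lambda>\<omega>. \<lambda>p\<in>J \<times> I. \<omega> (prod.swap p)) \<in> measurable ?\<Omega> (PiM (J \<times> I) (\<lambda>_. M))"
      by (auto intro!: measurable_restrict measurable_component_singleton)
    have mb: "(\<lambda>\<omega>. \<lambda>j\<in>J. \<lambda>i\<in>I. \<omega> (j,i)) \<in> measurable (PiM (J \<times> I) (\<lambda>_. M)) (PiM J (\<lambda>_. PiM I (\<lambda>_. M)))"
      by (auto intro!: measurable_restrict measurable_component_singleton)
    have mc: "compose J ?ws \<in> measurable (PiM J (\<lambda>_. PiM I (\<lambda>_. M))) (PiM J (\<lambda>_. ?\<nu>))"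
      by (rule compose_meas[OF ws\<nu>])
    have mg: "g \<in> borel_measurable (PiM J (\<lambda>_. ?\<nu>))"
      using g unfolding J_def
      by (simp only: measurable_cong_sets[OF sets_PiM_cong[OF refl real_distribution.events_eq_borel[OF R\<nu>]] refl])
    have "distr (PiM J (\<lambda>_. ?\<nu>)) borel g = distr ?\<Omega> borel (g \<circ> (compose J ?ws \<circ> ((\<lambda>\<omega>. \<lambda>j\<in>J. \<lambda>i\<in>I. \<omega> (j,i)) \<circ> (\<lambda>\<omega>. \<lambda>p\<in>J \<times> I. \<omega> (prod.swap p)))))"
      apply (subst w1)
      apply (subst w2)
      apply (subst w3)
      apply (subst distr_distr[OF mb ms])
      apply (subst distr_distr[OF mc measurable_comp[OF ms mb]])
      apply (subst distr_distr[OF mg measurable_comp[OF measurable_comp[OF ms mb] mc]])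
      apply (rule refl)
      done
    also have "\<dots> = distr ?\<Omega> borel (\<lambda>\<omega>. g (\<lambda>j\<in>J. \<Sum>i\<in>I. \<theta> i * \<omega> (i,j)))"
      by (rule distr_cong) (auto simp: compose_def intro!: arg_cong[where f=g] restrict_ext sum.cong)
    finally show ?thesis .
  qed
  have m1: "(\<lambda>\<omega>. g (\<lambda>j\<in>J. \<Sum>i\<in>I. \<theta> i * \<omega> (i,j))) \<in> borel_measurable ?\<Omega>"
    unfolding measurable_cong_sets[OF sO refl] J_def using I by measurable
  have m2: "(\<lambda>\<omega>. \<Sum>i\<in>I. \<theta> i * g (\<lambda>j\<in>J. \<omega> (i,j))) \<in> borel_measurable ?\<Omega>"
    unfolding measurable_cong_sets[OF sO refl] J_def using I by measurable
  have "cdf (distr (PiM I (\<lambda>_. ?Y)) borel ?ws) t \<le> cdf (distr (PiM J (\<lambda>_. ?\<nu>)) borel g) t"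
    unfolding S W
  proof (rule cdf_distr_mono_pointwise[OF PO.prob_space_axioms m1 m2])
    fix \<omega> show "g (\<lambda>j\<in>J. \<Sum>i\<in>I. \<theta> i * \<omega> (i,j)) \<le> (\<Sum>i\<in>I. \<theta> i * g (\<lambda>j\<in>J. \<omega> (i,j)))"
      using sup[of k \<theta> "\<lambda>i j. \<omega> (i,j)"] \<theta> unfolding I_def J_def by simp
  qed
  also have "\<dots> \<le> cdf ?Y t"
    by (rule st_mono_prod[OF M R\<nu> le\<nu> J(1) g[folded J_def] mono[unfolded J_def[symmetric]]])
  finally show "cdf (distr (PiM {1..k} (\<lambda>_. ?Y)) borel (\<lambda>x. \<Sum>i=1..k. \<theta> i * x i)) t
        \<le> cdf (distr (PiM {1..n} (\<lambda>_. M)) borel g) t" unfolding I_def J_def .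
qed




lemma main_gen:
  fixes g :: "nat \<Rightarrow> (nat \<Rightarrow> real) \<Rightarrow> real"
  assumes M: "real_distribution M" and Z: "real_distribution Z" and D: "in_Dminus M"
    and gm: "\<And>n. g n \<in> borel_measurable (PiM {1..n} (\<lambda>_. borel))"
    and mono: "\<And>n x y. (\<And>j. j \<in> {1..n} \<Longrightarrow> x j \<le> y j) \<Longrightarrow> g n x \<le> g n y"
    and sup: "\<And>n k \<theta> (y::nat\<Rightarrow>nat\<Rightarrow>real). n \<ge> 1 \<Longrightarrow> (\<forall>i\<in>{1..k}. 0 \<le> \<theta> i) \<Longrightarrow> (\<Sum>i=1..k. \<theta> i) = 1 \<Longrightarrow>
          g n (\<lambda>j\<in>{1..n}. \<Sum>i=1..k. \<theta> i * y i j) \<le> (\<Sum>i=1..k. \<theta> i * g n (\<lambda>j\<in>{1..n}. y i j))"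
    and w: "weak_conv_m (\<lambda>n. distr (PiM {1..n} (\<lambda>_. M)) borel (g n)) Z"
  shows "in_Dminus Z"
  unfolding in_Dminus_def st_le_def
proof (intro allI impI)
  fix k :: nat and \<theta> :: "nat \<Rightarrow> real" and t :: real
  assume \<theta>: "(\<forall>i\<in>{1..k}. 0 \<le> \<theta> i) \<and> (\<Sum>i=1..k. \<theta> i) = 1"
  have k: "k \<ge> 1" using \<theta> by (cases k) auto
  interpret R: real_distribution M by fact
  define \<mu> where "\<mu> n = distr (PiM {1..n} (\<lambda>_. M)) borel (g n)" for n
  have R\<mu>: "real_distribution (\<mu> n)" for n
  proof -
    interpret P: prob_space "PiM {1..n} (\<lambda>_. M)" by (intro prob_space_PiM R.prob_space_axioms)
    show ?thesis unfolding \<mu>_def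
      by (rule P.real_distribution_distr)
         (use gm[of n] in \<open>simp only: measurable_cong_sets[OF sets_PiM_cong[OF refl R.events_eq_borel] refl]\<close>)
  qed
  have le: "cdf (distr (PiM {1..k} (\<lambda>_. \<mu> n)) borel (\<lambda>x. \<Sum>i\<in>{1..k}. \<theta> i * x i)) s \<le> cdf (\<mu> n) s"
    if "n \<ge> 1" for n s
  proof -
    have "in_Dminus (\<mu> n)" unfolding \<mu>_def
      by (rule dom[OF M D that gm mono sup[OF that]])
    then show ?thesis using \<theta> unfolding in_Dminus_def st_le_def by blast
  qed
  have w2: "weak_conv_m (\<lambda>n. distr (PiM {1..k} (\<lambda>_. \<mu> n)) borel (\<lambda>x. \<Sum>i\<in>{1..k}. \<theta> i * x i))
                     (distr (PiM {1..k} (\<lambda>_. Z)) borel (\<lambda>x. \<Sum>i\<in>{1..k}. \<theta> i * x i))"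
    by (rule weak_conv_wsum[OF R\<mu> Z w[folded \<mu>_def]]) (use k in auto)
  have RZ: "real_distribution (distr (PiM {1..k} (\<lambda>_. Z)) borel (\<lambda>x. \<Sum>i\<in>{1..k}. \<theta> i * x i))"
  proof -
    interpret RZ: real_distribution Z by fact
    interpret P: prob_space "PiM {1..k} (\<lambda>_. Z)" by (intro prob_space_PiM RZ.prob_space_axioms)
    show ?thesis by (intro P.real_distribution_distr wsum_meas RZ.events_eq_borel) auto
  qed
  have R\<nu>: "real_distribution (distr (PiM {1..k} (\<lambda>_. \<mu> n)) borel (\<lambda>x. \<Sum>i\<in>{1..k}. \<theta> i * x i))" for n
  proof -
    interpret RZ: real_distribution "\<mu> n" by (rule R\<mu>)
    interpret P: prob_space "PiM {1..k} (\<lambda>_. \<mu> n)" by (intro prob_space_PiM RZ.prob_space_axioms)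
    show ?thesis by (intro P.real_distribution_distr wsum_meas RZ.events_eq_borel) auto
  qed
  show "cdf (distr (PiM {1..k} (\<lambda>_. Z)) borel (\<lambda>x. \<Sum>i=1..k. \<theta> i * x i)) t \<le> cdf Z t"
    by (rule st_limit[OF R\<mu> Z w[folded \<mu>_def] R\<nu> RZ w2, of 1]) (rule le)
qed

lemma restrict_image_same: "restrict f A ` A = f ` A" by auto

theorem theorem3:
  fixes M Z :: "real measure"
  assumes "real_distribution M" and "real_distribution Z" and "in_Dminus M"
  shows "((\<exists>(a::nat \<Rightarrow> real) (b::nat \<Rightarrow> real). (\<forall>n. 0 < a n) \<and>
            weak_conv_m (\<lambda>n. distr (PiM {1..n} (\<lambda>_. M)) borel
                              (\<lambda>x. a n * (\<Sum>i=1..n. x i) - b n)) Z)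
           \<longrightarrow> in_Dminus Z)
       \<and> ((\<exists>(a::nat \<Rightarrow> real) (b::nat \<Rightarrow> real). (\<forall>n. 0 < a n) \<and>
            weak_conv_m (\<lambda>n. distr (PiM {1..n} (\<lambda>_. M)) borel
                              (\<lambda>x. a n * Max (x ` {1..n}) - b n)) Z)
           \<longrightarrow> in_Dminus Z)"
proof (intro conjI impI)
  assume "\<exists>(a::nat \<Rightarrow> real) (b::nat \<Rightarrow> real). (\<forall>n. 0 < a n) \<and>
            weak_conv_m (\<lambda>n. distr (PiM {1..n} (\<lambda>_. M)) borel
                              (\<lambda>x. a n * (\<Sum>i=1..n. x i) - b n)) Z"
  then obtain a b where a: "\<And>n. 0 < a n" and w: "weak_conv_m (\<lambda>n. distr (PiM {1..n} (\<lambda>_. M)) borel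
                              (\<lambda>x. a n * (\<Sum>i=1..n. x i) - b n)) Z" by blast
  show "in_Dminus Z"
  proof (rule main_gen[OF assms, of "\<lambda>n x. a n * (\<Sum>i=1..n. x i) - b n"])
    fix n show "(\<lambda>x. a n * (\<Sum>i=1..n. x i) - b n) \<in> borel_measurable (PiM {1..n} (\<lambda>_. borel))"
      by measurable
  next
    fix n and x y :: "nat \<Rightarrow> real" assume "\<And>j. j \<in> {1..n} \<Longrightarrow> x j \<le> y j"
    then have "(\<Sum>i=1..n. x i) \<le> (\<Sum>i=1..n. y i)" by (intro sum_mono) auto
    then show "a n * (\<Sum>i=1..n. x i) - b n \<le> a n * (\<Sum>i=1..n. y i) - b n"
      using a[of n] by simp
  next
    fix n k :: nat and \<theta> :: "nat \<Rightarrow> real" and y :: "nat \<Rightarrow> nat \<Rightarrow> real"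
    assume th: "(\<Sum>i=1..k. \<theta> i) = 1"
    have "(\<Sum>i=1..k. \<theta> i * (a n * (\<Sum>j=1..n. y i j) - b n))
        = a n * (\<Sum>i=1..k. \<Sum>j=1..n. \<theta> i * y i j) - b n * (\<Sum>i=1..k. \<theta> i)"
      by (simp add: algebra_simps sum_subtractf sum_distrib_left sum_distrib_right)
    also have "\<dots> = a n * (\<Sum>j=1..n. \<Sum>i=1..k. \<theta> i * y i j) - b n"
    proof -
      have "(\<Sum>i=1..k. \<Sum>j=1..n. \<theta> i * y i j) = (\<Sum>j=1..n. \<Sum>i=1..k. \<theta> i * y i j)"
        by (rule sum.swap)
      then show ?thesis using th by simp
    qed
    finally show "a n * (\<Sum>j=1..n. (\<lambda>j\<in>{1..n}. \<Sum>i=1..k. \<theta> i * y i j) j) - b n \<le>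
        (\<Sum>i=1..k. \<theta> i * (a n * (\<Sum>j=1..n. (\<lambda>j\<in>{1..n}. y i j) j) - b n))"
      by simp
  qed (rule w)
next
  assume "\<exists>(a::nat \<Rightarrow> real) (b::nat \<Rightarrow> real). (\<forall>n. 0 < a n) \<and>
            weak_conv_m (\<lambda>n. distr (PiM {1..n} (\<lambda>_. M)) borel
                              (\<lambda>x. a n * Max (x ` {1..n}) - b n)) Z"
  then obtain a b where a: "\<And>n. 0 < a n" and w: "weak_conv_m (\<lambda>n. distr (PiM {1..n} (\<lambda>_. M)) borel
                              (\<lambda>x. a n * Max (x ` {1..n}) - b n)) Z" by blast
  show "in_Dminus Z"
  proof (rule main_gen[OF assms, of "\<lambda>n x. a n * Max (x ` {1..n}) - b n"])
    fix n show "(\<lambda>x. a n * Max (x ` {1..n}) - b n) \<in> borel_measurable (PiM {1..n} (\<lambda>_. borel))"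
      by measurable
  next
    fix n and x y :: "nat \<Rightarrow> real" assume xy: "\<And>j. j \<in> {1..n} \<Longrightarrow> x j \<le> y j"
    have "Max (x ` {1..n}) \<le> Max (y ` {1..n})"
    proof (cases "n = 0")
      case False
      then show ?thesis using xy
        by (subst Max_le_iff) (auto intro: order.trans[OF xy Max_ge])
    qed simp
    then show "a n * Max (x ` {1..n}) - b n \<le> a n * Max (y ` {1..n}) - b n"
      using a[of n] by simp
  next
    fix n k :: nat and \<theta> :: "nat \<Rightarrow> real" and y :: "nat \<Rightarrow> nat \<Rightarrow> real"
    assume n: "n \<ge> 1" and th0: "\<forall>i\<in>{1..k}. 0 \<le> \<theta> i" and th: "(\<Sum>i=1..k. \<theta> i) = 1"
    have "Max ((\<lambda>j. \<Sum>i=1..k. \<theta> i * y i j) ` {1..n}) \<le> (\<Sum>i=1..k. \<theta> i * Max ((\<lambda>j. y i j) ` {1..n}))"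
    proof (subst Max_le_iff)
      show "\<forall>z\<in>(\<lambda>j. \<Sum>i=1..k. \<theta> i * y i j) ` {1..n}. z \<le> (\<Sum>i=1..k. \<theta> i * Max ((\<lambda>j. y i j) ` {1..n}))"
        using th0 by (auto intro!: sum_mono mult_left_mono Max_ge)
    qed (use n in auto)
    then have "a n * Max ((\<lambda>j. \<Sum>i=1..k. \<theta> i * y i j) ` {1..n}) - b n \<le>
               a n * (\<Sum>i=1..k. \<theta> i * Max ((\<lambda>j. y i j) ` {1..n})) - b n * (\<Sum>i=1..k. \<theta> i)"
      using a[of n] th by simp
    also have "\<dots> = (\<Sum>i=1..k. \<theta> i * (a n * Max ((\<lambda>j. y i j) ` {1..n}) - b n))"
      by (simp add: algebra_simps sum_subtractf sum_distrib_left sum_distrib_right)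
    finally show "a n * Max ((\<lambda>j\<in>{1..n}. \<Sum>i=1..k. \<theta> i * y i j) ` {1..n}) - b n \<le>
        (\<Sum>i=1..k. \<theta> i * (a n * Max ((\<lambda>j\<in>{1..n}. y i j) ` {1..n}) - b n))"
      by (simp only: restrict_image_same)
  qed (rule w)
qed


end
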